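(* Let $P$ be a finite poset, $\phi:P\to\mathbb{N}$ an isotone map and $\mathcal{J}(\phi)=\{\psi\in\mathrm{Hom}(P,\mathbb{N}):\psi\le\phi\}$. The inclusion-minimal elements of the family of sets $\{\Lambda\psi : \psi\in\mathrm{Hom}(P,\mathbb{N}),\ \psi\notin\mathcal{J}(\phi)\}$ are exactly the sets $\{(p_0,0),(p_1,1),\dots,(p_r,r)\}$ where $p_0\le p_1\le\dots\le p_r$ is a multichain in $P$, $\phi(p_r)=r$, and $\phi(p_i)>i$ for all $i<r$.
   Context: $\mathbb{N}=\{0,1,2,\dots\}$; $\mathrm{Hom}(P,\mathbb{N})$ is the set of isotone maps $P\to\mathbb{N}$, ordered by $\psi\le\phi$ iff $\psi(p)\le\phi(p)$ for all $p$. The ascent of $\psi$ is $\Lambda\psi=\{(p,i)\in P\times\mathbb{N}: \psi(q)\le i<\psi(p)\text{ for all } q<p\}$. *)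

theory Defs
  imports Main
begin

text \<open>A finite poset P is modelled as a type of class finite and order.
  Hom(P,N) is the set of monotone (isotone) maps; the order on maps is the
  pointwise order of the library.\<close>

definition Hom :: "('a::order \<Rightarrow> nat) set" where
  "Hom = {\<psi>. mono \<psi>}"

definition ascent :: "('a::order \<Rightarrow> nat) \<Rightarrow> ('a \<times> nat) set" where
  "ascent \<psi> = {(p, i). (\<forall>q. q < p \<longrightarrow> \<psi> q \<le> i) \<and> i < \<psi> p}"

definition J :: "('a::order \<Rightarrow> nat) \<Rightarrow> ('a \<Rightarrow> nat) set" where
  "J \<phi> = {\<psi> \<in> Hom. \<psi> \<le> \<phi>}"

definition inclusion_minimal :: "'b set set \<Rightarrow> 'b set \<Rightarrow> bool" where
  "inclusion_minimal F S \<longleftrightarrow> S \<in> F \<and> (\<forall>T\<in>F. T \<subseteq> S \<longrightarrow> T = S)"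

end

theory Submission
  imports Defs
begin

lemma min_asc:
  fixes \<psi> :: "'a::{finite, order} \<Rightarrow> nat"
  assumes "i < \<psi> x"
  shows "\<exists>y\<le>x. (y,i) \<in> ascent \<psi>"
proof -
  let ?A = "{y. y \<le> x \<and> i < \<psi> y}"
  have "finite ?A" by simp
  moreover have "x \<in> ?A" using assms by simp
  ultimately obtain y where y: "y \<in> ?A" "\<forall>b\<in>?A. b \<le> y \<longrightarrow> y = b"
    using finite_has_minimal2 by blast
  have "\<forall>q. q < y \<longrightarrow> \<psi> q \<le> i"
  proof (intro allI impI)
    fix q assume "q < y"
    show "\<psi> q \<le> i"
    proof (rule ccontr)
      assume "\<not> \<psi> q \<le> i"
      hence "q \<in> ?A" using \<open>q < y\<close> y(1) by auto
      thus False using y(2) \<open>q < y\<close> by auto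
    qed
  qed
  thus ?thesis using y(1) unfolding ascent_def by auto
qed

lemma down_chain:
  fixes \<psi> :: "'a::{finite, order} \<Rightarrow> nat"
  shows "(y, r) \<in> ascent \<psi> \<Longrightarrow> \<exists>p. p r = y \<and> (\<forall>i\<le>r. (p i, i) \<in> ascent \<psi>) \<and> (\<forall>i<r. p i \<le> p (Suc i))"
proof (induction r arbitrary: y)
  case 0
  hence y0: "(y, 0) \<in> ascent \<psi>" .
  show ?case
  proof (intro exI[of _ "\<lambda>_. y"] conjI allI impI)
    fix i :: nat assume "i \<le> 0"
    hence "i = 0" by simp
    thus "((\<lambda>_. y) i, i) \<in> ascent \<psi>" using y0 by simp
  qed simp_all
next
  case (Suc r)
  hence "r < \<psi> y" unfolding ascent_def by auto
  then obtain z where z: "z \<le> y" "(z, r) \<in> ascent \<psi>" using min_asc by blast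
  then obtain p where p: "p r = z" "\<forall>i\<le>r. (p i, i) \<in> ascent \<psi>" "\<forall>i<r. p i \<le> p (Suc i)"
    using Suc.IH by blast
  define q where "q = (\<lambda>i. if i = Suc r then y else p i)"
  have 1: "q (Suc r) = y" by (simp add: q_def)
  have 2: "\<forall>i\<le>Suc r. (q i, i) \<in> ascent \<psi>"
  proof (intro allI impI)
    fix i assume "i \<le> Suc r"
    thus "(q i, i) \<in> ascent \<psi>" using p(2) Suc.prems unfolding q_def le_Suc_eq by auto
  qed
  have 3: "\<forall>i<Suc r. q i \<le> q (Suc i)"
  proof (intro allI impI)
    fix i assume "i < Suc r"
    hence "i < r \<or> i = r" by auto
    thus "q i \<le> q (Suc i)" using p(1,3) z(1) unfolding q_def by auto
  qed
  show ?case using 1 2 3 by blast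
qed

lemma key:
  fixes \<psi> \<phi> :: "'a::{finite, order} \<Rightarrow> nat"
  assumes "\<psi> \<in> Hom" "\<psi> \<notin> J \<phi>" "\<phi> \<in> Hom"
  shows "\<exists>r p. (\<forall>i<r. p i \<le> p (Suc i)) \<and> \<phi> (p r) = r \<and> (\<forall>i<r. \<phi> (p i) > i) \<and>
       {(p i, i) | i. i \<le> r} \<subseteq> ascent \<psi>"
proof -
  have mphi: "mono \<phi>" using assms(3) by (simp add: Hom_def)
  have "\<not> \<psi> \<le> \<phi>" using assms(1,2) by (simp add: J_def)
  then obtain x where x: "\<phi> x < \<psi> x" by (meson le_funI not_le)
  have gen: "\<exists>y. (y, \<phi> z) \<in> ascent \<psi> \<and> \<phi> y \<le> \<phi> z" if zz: "\<phi> z < \<psi> z" for z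
  proof -
    obtain y where "y \<le> z" "(y, \<phi> z) \<in> ascent \<psi>" using min_asc[of "\<phi> z" \<psi> z, OF zz] by blast
    moreover have "\<phi> y \<le> \<phi> z" by (rule monoD[OF mphi \<open>y \<le> z\<close>])
    ultimately show ?thesis by blast
  qed
  define R where "R = (\<lambda>r. \<exists>y. (y, r) \<in> ascent \<psi> \<and> \<phi> y \<le> r)"
  have "R (\<phi> x)" using gen[OF x] unfolding R_def by blast
  hence Rr: "R (LEAST r. R r)" by (rule LeastI)
  define r where "r = (LEAST r. R r)"
  have minr: "\<not> R k" if "k < r" for k using not_less_Least[of k R] that unfolding r_def by blast
  obtain y where y: "(y, r) \<in> ascent \<psi>" "\<phi> y \<le> r" using Rr unfolding R_def r_def by blast
  have "r < \<psi> y" using y(1) unfolding ascent_def by auto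
  hence "\<phi> y < \<psi> y" using y(2) by simp
  from gen[OF this] have "R (\<phi> y)" unfolding R_def by blast
  hence phiy: "\<phi> y = r" using minr y(2) by (meson le_neq_implies_less)
  obtain p where p: "p r = y" "\<forall>i\<le>r. (p i, i) \<in> ascent \<psi>" "\<forall>i<r. p i \<le> p (Suc i)"
    using down_chain[OF y(1)] by blast
  have "\<forall>i<r. \<phi> (p i) > i"
  proof (intro allI impI)
    fix i assume "i < r"
    hence "\<not> R i" by (rule minr)
    moreover have "(p i, i) \<in> ascent \<psi>" using p(2) \<open>i < r\<close> by simp
    ultimately show "\<phi> (p i) > i" unfolding R_def by (meson not_le)
  qed
  moreover have "{(p i, i) | i. i \<le> r} \<subseteq> ascent \<psi>" using p(2) by blast
  moreover have "\<phi> (p r) = r" using p(1) phiy by simp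
  ultimately show ?thesis using p(3) by blast
qed

lemma chain_mono:
  fixes p :: "nat \<Rightarrow> 'a::order"
  assumes "\<forall>i<r. p i \<le> p (Suc i)" "i \<le> k" "k \<le> r"
  shows "p i \<le> p k"
  using assms(2,3)
proof (induction k)
  case 0 thus ?case by simp
next
  case (Suc k)
  show ?case
  proof (cases "i = Suc k")
    case True thus ?thesis by simp
  next
    case False
    hence "p i \<le> p k" using Suc by simp
    also have "p k \<le> p (Suc k)" using assms(1) Suc.prems by simp
    finally show ?thesis .
  qed
qed

lemma compare:
  fixes \<phi> :: "'a::{finite, order} \<Rightarrow> nat"
  assumes "\<phi> (p' r') = r'" "\<phi> (p r) = r" "\<forall>i<r. \<phi> (p i) > i"
    and sub: "{(p' i, i) | i. i \<le> r'} \<subseteq> {(p i, i) | i. i \<le> r}"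
  shows "{(p' i, i) | i. i \<le> r'} = {(p i, i) | i. i \<le> r}"
proof -
  have "(p' r', r') \<in> {(p i, i) | i. i \<le> r}" using sub by blast
  hence "r' \<le> r" "p' r' = p r'" by auto
  have "r' = r"
  proof (rule ccontr)
    assume "r' \<noteq> r"
    hence "r' < r" using \<open>r' \<le> r\<close> by simp
    hence "\<phi> (p r') > r'" using assms(3) by simp
    thus False using assms(1) \<open>p' r' = p r'\<close> by simp
  qed
  have "p' i = p i" if "i \<le> r" for i
  proof -
    have "(p' i, i) \<in> {(p i, i) | i. i \<le> r}" using sub that \<open>r' = r\<close> by blast
    thus ?thesis by auto
  qed
  thus ?thesis using \<open>r' = r\<close> by auto
qed

lemma chain_in:
  fixes \<phi> :: "'a::{finite, order} \<Rightarrow> nat"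
  assumes "\<phi> \<in> Hom" and ch: "\<forall>i<r. p i \<le> p (Suc i)" "\<phi> (p r) = r" "\<forall>i<r. \<phi> (p i) > i"
  shows "{(p i, i) | i. i \<le> r} \<in> {ascent \<psi> | \<psi>. \<psi> \<in> Hom \<and> \<psi> \<notin> J \<phi>}"
proof -
  define A where "A = (\<lambda>x. insert 0 {Suc i | i. i \<le> r \<and> p i \<le> x})"
  define \<psi> where "\<psi> = (\<lambda>x. Max (A x))"
  have finA: "finite (A x)" for x
  proof -
    have "A x \<subseteq> insert 0 (Suc ` {..r})" unfolding A_def by auto
    thus ?thesis by (rule finite_subset) simp
  qed
  have mono: "mono \<psi>"
  proof (rule monoI)
    fix x y :: 'a assume "x \<le> y"
    hence "A x \<subseteq> A y" unfolding A_def by (auto intro: order_trans)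
    thus "\<psi> x \<le> \<psi> y" unfolding \<psi>_def by (rule Max_mono) (auto simp: finA A_def)
  qed
  have ge: "Suc i \<le> \<psi> (p i)" if "i \<le> r" for i
  proof -
    have "Suc i \<in> A (p i)" unfolding A_def using that by auto
    thus ?thesis unfolding \<psi>_def using finA by simp
  qed
  have hom: "\<psi> \<in> Hom" using mono by (simp add: Hom_def)
  have notJ: "\<psi> \<notin> J \<phi>"
  proof
    assume "\<psi> \<in> J \<phi>"
    hence "\<psi> (p r) \<le> \<phi> (p r)" by (simp add: J_def le_fun_def)
    thus False using ge[of r] ch(2) by simp
  qed
  have sub: "ascent \<psi> \<subseteq> {(p i, i) | i. i \<le> r}"
  proof
    fix z assume "z \<in> ascent \<psi>"
    then obtain x i where z: "z = (x, i)" "\<forall>q. q < x \<longrightarrow> \<psi> q \<le> i" "i < \<psi> x"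
      unfolding ascent_def by auto
    have "\<psi> x \<in> A x" unfolding \<psi>_def using finA by (intro Max_in) (auto simp: A_def)
    then obtain k where k: "k \<le> r" "p k \<le> x" "\<psi> x = Suc k"
      using z(3) unfolding A_def by auto
    have "i \<le> k" using k z(3) by simp
    hence "p i \<le> x" using chain_mono[OF ch(1) _ k(1)] k(2) order_trans by blast
    moreover have "\<not> p i < x"
    proof
      assume "p i < x"
      hence "\<psi> (p i) \<le> i" using z(2) by simp
      thus False using ge[of i] \<open>i \<le> k\<close> k(1) by simp
    qed
    ultimately have "p i = x" by simp
    thus "z \<in> {(p i, i) | i. i \<le> r}" using z(1) \<open>i \<le> k\<close> k(1) by auto
  qed
  obtain r' p' where c': "\<forall>i<r'. p' i \<le> p' (Suc i)" "\<phi> (p' r') = r'" "\<forall>i<r'. \<phi> (p' i) > i"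
       "{(p' i, i) | i. i \<le> r'} \<subseteq> ascent \<psi>"
    using key[OF hom notJ assms(1)] by blast
  have "{(p' i, i) | i. i \<le> r'} \<subseteq> {(p i, i) | i. i \<le> r}"
    using c'(4) sub by (rule order_trans)
  hence "{(p' i, i) | i. i \<le> r'} = {(p i, i) | i. i \<le> r}"
    by (rule compare[of \<phi> p' r' p r, OF c'(2) ch(2) ch(3)])
  hence "ascent \<psi> = {(p i, i) | i. i \<le> r}" using sub c'(4) by blast
  thus ?thesis using hom notJ by blast
qed

theorem proposition4p12:
  fixes \<phi> :: "'a::{finite, order} \<Rightarrow> nat"
  assumes "\<phi> \<in> Hom"
  shows "inclusion_minimal {ascent \<psi> | \<psi>. \<psi> \<in> Hom \<and> \<psi> \<notin> J \<phi>} S \<longleftrightarrow>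
    (\<exists>(r::nat) (p::nat \<Rightarrow> 'a).
       (\<forall>i<r. p i \<le> p (Suc i)) \<and> \<phi> (p r) = r \<and> (\<forall>i<r. \<phi> (p i) > i) \<and>
       S = {(p i, i) | i. i \<le> r})"
proof
  assume m: "inclusion_minimal {ascent \<psi> | \<psi>. \<psi> \<in> Hom \<and> \<psi> \<notin> J \<phi>} S"
  have mS: "S \<in> {ascent \<psi> | \<psi>. \<psi> \<in> Hom \<and> \<psi> \<notin> J \<phi>}"
    and mA: "\<And>T. T \<in> {ascent \<psi> | \<psi>. \<psi> \<in> Hom \<and> \<psi> \<notin> J \<phi>} \<Longrightarrow> T \<subseteq> S \<Longrightarrow> T = S"
    using m unfolding inclusion_minimal_def by auto
  obtain \<psi> where \<psi>: "S = ascent \<psi>" "\<psi> \<in> Hom" "\<psi> \<notin> J \<phi>"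
    using mS by auto
  obtain r p where c: "\<forall>i<r. p i \<le> p (Suc i)" "\<phi> (p r) = r" "\<forall>i<r. \<phi> (p i) > i"
       "{(p i, i) | i. i \<le> r} \<subseteq> ascent \<psi>"
    using key[OF \<psi>(2,3) assms] by blast
  have "{(p i, i) | i. i \<le> r} \<in> {ascent \<psi> | \<psi>. \<psi> \<in> Hom \<and> \<psi> \<notin> J \<phi>}"
    using chain_in[OF assms c(1-3)] .
  moreover have "{(p i, i) | i. i \<le> r} \<subseteq> S" using c(4) \<psi>(1) by simp
  ultimately have "{(p i, i) | i. i \<le> r} = S" by (rule mA)
  thus "\<exists>(r::nat) (p::nat \<Rightarrow> 'a).
       (\<forall>i<r. p i \<le> p (Suc i)) \<and> \<phi> (p r) = r \<and> (\<forall>i<r. \<phi> (p i) > i) \<and>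
       S = {(p i, i) | i. i \<le> r}" using c(1-3) by (intro exI[of _ r] exI[of _ p]) simp
next
  assume "\<exists>(r::nat) (p::nat \<Rightarrow> 'a).
       (\<forall>i<r. p i \<le> p (Suc i)) \<and> \<phi> (p r) = r \<and> (\<forall>i<r. \<phi> (p i) > i) \<and>
       S = {(p i, i) | i. i \<le> r}"
  then obtain r p where c: "\<forall>i<r. p i \<le> p (Suc i)" "\<phi> (p r) = r" "\<forall>i<r. \<phi> (p i) > i"
       "S = {(p i, i) | i. i \<le> r}" by blast
  have inS: "S \<in> {ascent \<psi> | \<psi>. \<psi> \<in> Hom \<and> \<psi> \<notin> J \<phi>}"
    unfolding c(4) by (rule chain_in[OF assms c(1-3)])
  have eq: "T = S" if T: "T \<in> {ascent \<psi> | \<psi>. \<psi> \<in> Hom \<and> \<psi> \<notin> J \<phi>}" "T \<subseteq> S" for T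
  proof -
    obtain \<psi> where \<psi>: "T = ascent \<psi>" "\<psi> \<in> Hom" "\<psi> \<notin> J \<phi>" using T(1) by auto
    obtain r' p' where c': "\<forall>i<r'. p' i \<le> p' (Suc i)" "\<phi> (p' r') = r'" "\<forall>i<r'. \<phi> (p' i) > i"
       "{(p' i, i) | i. i \<le> r'} \<subseteq> ascent \<psi>"
      using key[OF \<psi>(2,3) assms] by blast
    have "{(p' i, i) | i. i \<le> r'} \<subseteq> S"
      using c'(4) T(2) \<psi>(1) by simp
    hence "{(p' i, i) | i. i \<le> r'} = S"
      unfolding c(4) by (rule compare[of \<phi> p' r' p r, OF c'(2) c(2) c(3)])
    thus ?thesis using T(2) c'(4) \<psi>(1) by simp
  qed
  show "inclusion_minimal {ascent \<psi> | \<psi>. \<psi> \<in> Hom \<and> \<psi> \<notin> J \<phi>} S"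
    unfolding inclusion_minimal_def using inS eq by blast
qed

end
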